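(* Let $g:[0,1]\to[0,1]$ be a continuous piecewise linear unimodal map and let $f(x)=1-|1-2x|$ be the tent map. Suppose there is a piecewise linear homeomorphism $h:[0,1]\to[0,1]$ with $h\circ f=g\circ h$. Then $g$ is linear on some interval $[0,\delta]$, $\delta>0$, with slope $2$, i.e. $g'(0)=2$.
   Context: A map $g:[0,1]\to[0,1]$ is called unimodal if there is $v\in(0,1)$ such that $g$ is increasing on $[0,v]$, decreasing on $[v,1]$, and $g(0)=g(1)=0$, $g(v)=1$. Piecewise linear means continuous with finitely many points of non-differentiability (kinks). *)

theory Defs
  imports "HOL-Analysis.Analysis"
begin

definition piecewise_linear_on :: "real \<Rightarrow> real \<Rightarrow> (real \<Rightarrow> real) \<Rightarrow> bool" where
  "piecewise_linear_on a b g \<longleftrightarrow> continuous_on {a..b} g \<and>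
     (\<exists>(xs :: real list). xs \<noteq> [] \<and> hd xs = a \<and> last xs = b \<and> sorted_wrt (<) xs \<and>
        (\<forall>i < length xs - 1. \<exists>m c. \<forall>x \<in> {xs ! i .. xs ! Suc i}. g x = m * x + c))"

definition unimodal :: "(real \<Rightarrow> real) \<Rightarrow> bool" where
  "unimodal g \<longleftrightarrow> g ` {0..1} \<subseteq> {0..1} \<and>
     (\<exists>v \<in> {0<..<1}. mono_on {0..v} g \<and> antimono_on {v..1} g \<and>
        g 0 = 0 \<and> g 1 = 0 \<and> g v = 1)"

definition tent :: "real \<Rightarrow> real" where
  "tent x = 1 - \<bar>1 - 2 * x\<bar>"

end

theory Submission
  imports Defs
begin

lemma pl_start:
  assumes "piecewise_linear_on 0 1 f"
  shows "\<exists>d>0. d \<le> 1 \<and> (\<exists>m c. \<forall>x\<in>{0..d}. f x = m*x+c)"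
proof -
  obtain xs where xs: "xs \<noteq> []" "hd xs = 0" "last xs = 1" "sorted_wrt (<) xs"
    "\<forall>i < length xs - 1. \<exists>m c. \<forall>x \<in> {xs ! i .. xs ! Suc i}. f x = m * x + c"
    using assms unfolding piecewise_linear_on_def by blast
  have len: "length xs \<ge> 2"
  proof (rule ccontr)
    assume "\<not> length xs \<ge> 2"
    with xs(1) obtain a where "xs = [a]" by (cases xs; cases "tl xs") auto
    with xs show False by simp
  qed
  have x0: "xs ! 0 = 0" using xs(1,2) by (simp add: hd_conv_nth)
  have lt: "xs ! 0 < xs ! 1" using xs(4) len by (simp add: sorted_wrt_iff_nth_less)
  have le1: "xs ! 1 \<le> 1"
  proof -
    have "last xs = xs ! (length xs - 1)" using xs(1) by (simp add: last_conv_nth)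
    moreover have "xs ! 1 \<le> xs ! (length xs - 1)"
    proof (cases "length xs - 1 = 1")
      case True then show ?thesis by simp
    next
      case False then show ?thesis using xs(4) len
        by (intro less_imp_le) (simp add: sorted_wrt_iff_nth_less)
    qed
    ultimately show ?thesis using xs(3) by simp
  qed
  obtain m c where "\<forall>x \<in> {xs ! 0 .. xs ! Suc 0}. f x = m * x + c"
    using xs(5) len by (metis One_nat_def Suc_1 diff_is_0_eq gr0I not_less_eq_eq)
  then show ?thesis using lt le1 x0 by (intro exI[of _ "xs ! 1"]) auto
qed

theorem lemma3p21:
  fixes g h k :: "real \<Rightarrow> real"
  assumes "g ` {0..1} \<subseteq> {0..1}"
    and "piecewise_linear_on 0 1 g"
    and "unimodal g"
    and "homeomorphism {0..1} {0..1} h k"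
    and "piecewise_linear_on 0 1 h"
    and "\<forall>x \<in> {0..1}. h (tent x) = g (h x)"
  shows "\<exists>\<delta> > 0. \<forall>x \<in> {0..\<delta>}. g x = g 0 + 2 * x"
proof -
  have g0: "g 0 = 0" using assms(3) unfolding unimodal_def by blast
  have himg: "h ` {0..1} = {0..1}" and hk: "\<And>x. x \<in> {0..1} \<Longrightarrow> k (h x) = x"
    and hcont: "continuous_on {0..1} h"
    using assms(4) unfolding homeomorphism_def by auto
  have inj: "inj_on h {0..1}" by (metis hk inj_onI)
  have t0: "tent 0 = 0" and t1: "tent 1 = 0" by (simp_all add: tent_def)
  obtain u where u: "u \<in> {0..1}" "h u = 0" using himg by (metis atLeastAtMost_iff imageE order_refl zero_le_one)
  have h0: "h 0 = 0"
  proof -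
    consider "u = 0" | "u = 1" | "0 < u \<and> u < 1" using u by fastforce
    then show ?thesis
    proof cases
      case 1 then show ?thesis using u by simp
    next
      case 2
      have "h (tent 1) = g (h 1)" using assms(6) by simp
      then show ?thesis using t1 u 2 g0 by simp
    next
      case 3
      have "(h 0 < h u \<and> h u < h 1) \<or> (h 1 < h u \<and> h u < h 0)"
        using continuous_inj_imp_mono[of 0 u 1 h] 3 hcont inj by auto
      moreover have "h 0 \<ge> 0" "h 1 \<ge> 0" using himg by auto
      ultimately show ?thesis using u by auto
    qed
  qed
  obtain d1 a c where d1: "d1 > 0" "d1 \<le> 1" "\<forall>x\<in>{0..d1}. h x = a*x+c"
    using pl_start[OF assms(5)] by blast
  have c0: "c = 0" using d1 h0 by (metis atLeastAtMost_iff mult_zero_right add_0 less_imp_le order_refl)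
  have hd1: "h d1 > 0"
  proof -
    have "d1 \<in> {0..1}" using d1 by auto
    then have "h d1 \<in> h ` {0..1}" by blast
    then have "h d1 \<ge> 0" using himg by auto
    moreover have "h d1 \<noteq> h 0" using inj d1 by (metis atLeastAtMost_iff inj_on_eq_iff less_irrefl order_refl zero_le_one less_imp_le)
    ultimately show ?thesis using h0 by simp
  qed
  have apos: "a > 0" using hd1 d1 c0
    by (metis atLeastAtMost_iff add_0_right less_imp_le order_refl zero_less_mult_pos2)
  obtain d2 b e where d2: "d2 > 0" "d2 \<le> 1" "\<forall>x\<in>{0..d2}. g x = b*x+e"
    using pl_start[OF assms(2)] by blast
  have e0: "e = 0" using d2 g0 by (metis atLeastAtMost_iff mult_zero_right add_0 less_imp_le order_refl)
  define x where "x = min (d1/2) (d2/a)"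
  have xpos: "x > 0" using d1 d2 apos by (simp add: x_def)
  have xa: "x \<le> d1/2" "x \<le> d2/a" unfolding x_def by (rule min.cobounded1, rule min.cobounded2)
  have x1: "2*x \<le> d1" "a*x \<le> d2" "x \<le> 1"
    using xa d1 apos by (linarith, simp add: pos_le_divide_eq mult.commute, linarith)
  have "tent x = 2*x" using xpos x1 d1 by (simp add: tent_def)
  moreover have "h (tent x) = g (h x)" using assms(6) xpos x1 by simp
  ultimately have "h (2*x) = g (h x)" by simp
  moreover have "h (2*x) = a*(2*x)" using d1 c0 x1 xpos by simp
  moreover have "h x = a*x" using d1 c0 x1 xpos by simp
  moreover have "g (a*x) = b*(a*x)" using d2 e0 x1 xpos apos by simp
  ultimately have "a*(2*x) = b*(a*x)" by simp
  then have b2: "b = 2" using apos xpos by simp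
  show ?thesis using d2 e0 b2 g0 by (intro exI[of _ d2]) auto
qed

end
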